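(* Let $N_1$ and $N_2$ be Petri nets. If $N_1\approx^\Delta_{bSTb}N_2$ then $N_1\approx_{\mathscr F}N_2$.
   Context: Fix visible actions $\mathrm{Act}$ and $\tau\notin\mathrm{Act}$. A Petri net $N=(S,T,F,M_0,\ell)$ has disjoint $S,T$, $F:(S\times T)\cup(T\times S)\to\mathbb N$, $M_0\in\mathbb N^S$, $\ell:T\to\mathrm{Act}\cup\{\tau\}$. ${}^\bullet x(y)=F(y,x)$, $x^\bullet(y)=F(x,y)$, extended additively to finite multisets. For finite nonempty multiset $G$ of transitions, $M[G\rangle M'$ iff ${}^\bullet G\le M$ and $M'=M-{}^\bullet G+G^\bullet$. Step failures equivalence: $M\xrightarrow{\alpha}M'$ iff $M[t\rangle M'$ with $\ell(t)=\alpha$; $\Rightarrow$ is the reflexive transitive closure of $\xrightarrow{\tau}$; $M\overset{a_1\cdots a_n}{\Longrightarrow}M'$ iff $M\Rightarrow\xrightarrow{a_1}\Rightarrow\cdots\xrightarrow{a_n}\Rightarrow M'$. For a step $A$ (finite nonempty multiset over $\mathrm{Act}$), $M\xrightarrow{A}$ iff $M[G\rangle$ for a finite multiset $G$ of transitions, none labelled $\tau$, with label multiset $A$. $(\sigma,X)$ with $\sigma\in\mathrm{Act}^*$ and $X$ a finite set of steps is a step failure pair iff some $M$ has $M_0\overset{\sigma}{\Longrightarrow}M$, $M\not\xrightarrow{\tau}$ and $M\not\xrightarrow{A}$ for all $A\in X$. $N_1\approx_{\mathscr F}N_2$ iff they have the same step failure pairs. $\approx^\Delta_{bSTb}$: An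 ST-marking is $(M,U)\in\mathbb N^S\times T^*$, initial $(M_0,\varepsilon)$; $(M,U)\xrightarrow{a^+}(M-{}^\bullet t,Ut)$ iff $\ell(t)=a\in\mathrm{Act}$ and $M[t\rangle$; $(M,U)\xrightarrow{a^{-n}}(M+t^\bullet,U^{-n})$ iff the $n$-th element $t$ of $U$ has label $a$ ($U^{-n}$: with it removed); $(M,U)\xrightarrow{\tau}(M',U)$ iff $M[t\rangle M'$ with $\ell(t)=\tau$. $N_1\approx^\Delta_{bSTb}N_2$ iff there is a relation $\mathcal B$ between ST-markings of $N_1$ and $N_2$ relating the initial ones such that: if $\mathfrak M_1\mathcal B\mathfrak M_2$ and $\mathfrak M_1\xrightarrow{\alpha}\mathfrak M_1'$ then $\mathfrak M_2\Rightarrow\mathfrak M_2^\dagger\xrightarrow{(\alpha)}\mathfrak M_2'$ with $\mathfrak M_1\mathcal B\mathfrak M_2^\dagger$ and $\mathfrak M_1'\mathcal B\mathfrak M_2'$ (here $\Rightarrow$ is the reflexive transitive closure of $\xrightarrow{\tau}$ and $\xrightarrow{(\alpha)}$ means $\xrightarrow{\alpha}$ or, if $\alpha=\tau$, equality), and symmetrically; and if $\mathfrak M_1\mathcal B\mathfrak M_2$ and there is an infinite $\tau$-sequence from $\mathfrak M_1$ all of whose states are related to $\mathfrak M_2$, then there is an infinite $\tau$-sequence from $\mathfrak M_2$ with every state of the first related to every state of the second, and symmetrically. *)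

theory Defs
  imports Main "HOL-Library.Multiset"
begin

text \<open>Petri nets over visible actions of type 'a; the label None plays the role of tau.
  F(s,t) is flow_in s t, F(t,s) is flow_out t s. Markings are functions 's => nat.\<close>

record ('s, 't, 'a) pnet =
  places :: "'s set"
  transitions :: "'t set"
  flow_in :: "'s \<Rightarrow> 't \<Rightarrow> nat"
  flow_out :: "'t \<Rightarrow> 's \<Rightarrow> nat"
  init :: "'s \<Rightarrow> nat"
  lab :: "'t \<Rightarrow> 'a option"

definition petri_net :: "('s, 't, 'a) pnet \<Rightarrow> bool" where
  "petri_net N \<longleftrightarrow>
     (\<forall>s t. flow_in N s t \<noteq> 0 \<longrightarrow> s \<in> places N \<and> t \<in> transitions N) \<and>
     (\<forall>t s. flow_out N t s \<noteq> 0 \<longrightarrow> s \<in> places N \<and> t \<in> transitions N) \<and>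
     (\<forall>s. init N s \<noteq> 0 \<longrightarrow> s \<in> places N)"

definition pre :: "('s, 't, 'a) pnet \<Rightarrow> 't \<Rightarrow> 's \<Rightarrow> nat" where
  "pre N t = (\<lambda>s. flow_in N s t)"

definition post :: "('s, 't, 'a) pnet \<Rightarrow> 't \<Rightarrow> 's \<Rightarrow> nat" where
  "post N t = (\<lambda>s. flow_out N t s)"

definition preM :: "('s, 't, 'a) pnet \<Rightarrow> 't multiset \<Rightarrow> 's \<Rightarrow> nat" where
  "preM N G = (\<lambda>s. \<Sum>t\<in>#G. pre N t s)"

definition postM :: "('s, 't, 'a) pnet \<Rightarrow> 't multiset \<Rightarrow> 's \<Rightarrow> nat" where
  "postM N G = (\<lambda>s. \<Sum>t\<in>#G. post N t s)"

definition fires_step :: "('s, 't, 'a) pnet \<Rightarrow> ('s \<Rightarrow> nat) \<Rightarrow> 't multiset \<Rightarrow> ('s \<Rightarrow> nat) \<Rightarrow> bool" where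
  "fires_step N M G M' \<longleftrightarrow> G \<noteq> {#} \<and> set_mset G \<subseteq> transitions N \<and>
     preM N G \<le> M \<and> M' = (\<lambda>s. M s - preM N G s + postM N G s)"

definition fires_lab :: "('s, 't, 'a) pnet \<Rightarrow> ('s \<Rightarrow> nat) \<Rightarrow> 'a option \<Rightarrow> ('s \<Rightarrow> nat) \<Rightarrow> bool" where
  "fires_lab N M \<alpha> M' \<longleftrightarrow> (\<exists>t. lab N t = \<alpha> \<and> fires_step N M {#t#} M')"

abbreviation tau_steps :: "('s, 't, 'a) pnet \<Rightarrow> ('s \<Rightarrow> nat) \<Rightarrow> ('s \<Rightarrow> nat) \<Rightarrow> bool" where
  "tau_steps N \<equiv> (\<lambda>M M'. fires_lab N M None M')\<^sup>*\<^sup>*"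

fun weak_trace :: "('s, 't, 'a) pnet \<Rightarrow> ('s \<Rightarrow> nat) \<Rightarrow> 'a list \<Rightarrow> ('s \<Rightarrow> nat) \<Rightarrow> bool" where
  "weak_trace N M [] M' \<longleftrightarrow> tau_steps N M M'"
| "weak_trace N M (a # \<sigma>) M' \<longleftrightarrow>
     (\<exists>M1 M2. tau_steps N M M1 \<and> fires_lab N M1 (Some a) M2 \<and> weak_trace N M2 \<sigma> M')"

definition step_enabled :: "('s, 't, 'a) pnet \<Rightarrow> ('s \<Rightarrow> nat) \<Rightarrow> 'a multiset \<Rightarrow> bool" where
  "step_enabled N M A \<longleftrightarrow>
     (\<exists>G M'. (\<forall>t\<in>#G. lab N t \<noteq> None) \<and> image_mset (lab N) G = image_mset Some A \<and>
            fires_step N M G M')"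

definition step_failure_pairs :: "('s, 't, 'a) pnet \<Rightarrow> ('a list \<times> 'a multiset set) set" where
  "step_failure_pairs N = {(\<sigma>, X). finite X \<and> (\<forall>A\<in>X. A \<noteq> {#}) \<and>
     (\<exists>M. weak_trace N (init N) \<sigma> M \<and> \<not> (\<exists>M'. fires_lab N M None M') \<and>
          (\<forall>A\<in>X. \<not> step_enabled N M A))}"

definition step_failures_equiv :: "('s1, 't1, 'a) pnet \<Rightarrow> ('s2, 't2, 'a) pnet \<Rightarrow> bool" where
  "step_failures_equiv N1 N2 \<longleftrightarrow> step_failure_pairs N1 = step_failure_pairs N2"

datatype 'a stlab = Start 'a | Finish 'a nat | STau

type_synonym ('s, 't) stmarking = "('s \<Rightarrow> nat) \<times> 't list"

definition st_markings :: "('s, 't, 'a) pnet \<Rightarrow> ('s, 't) stmarking set" where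
  "st_markings N = {(M, U). (\<forall>s. s \<notin> places N \<longrightarrow> M s = 0) \<and> set U \<subseteq> transitions N}"

text \<open>Finish a n is a^{-n}; the index n is 1-based as in the paper.\<close>
inductive st_step :: "('s, 't, 'a) pnet \<Rightarrow> ('s, 't) stmarking \<Rightarrow> 'a stlab \<Rightarrow> ('s, 't) stmarking \<Rightarrow> bool"
  for N where
  start: "\<lbrakk>t \<in> transitions N; lab N t = Some a; pre N t \<le> M\<rbrakk> \<Longrightarrow>
     st_step N (M, U) (Start a) (\<lambda>s. M s - pre N t s, U @ [t])"
| finish: "\<lbrakk>1 \<le> n; n \<le> length U; lab N (U ! (n - 1)) = Some a\<rbrakk> \<Longrightarrow>
     st_step N (M, U) (Finish a n) (\<lambda>s. M s + post N (U ! (n - 1)) s, take (n - 1) U @ drop n U)"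
| tau: "fires_lab N M None M' \<Longrightarrow> st_step N (M, U) STau (M', U)"

abbreviation st_tau_steps :: "('s, 't, 'a) pnet \<Rightarrow> ('s, 't) stmarking \<Rightarrow> ('s, 't) stmarking \<Rightarrow> bool" where
  "st_tau_steps N \<equiv> (\<lambda>x y. st_step N x STau y)\<^sup>*\<^sup>*"

definition bisim_half ::
  "('s1, 't1, 'a) pnet \<Rightarrow> ('s2, 't2, 'a) pnet \<Rightarrow>
   (('s1, 't1) stmarking \<Rightarrow> ('s2, 't2) stmarking \<Rightarrow> bool) \<Rightarrow> bool" where
  "bisim_half N1 N2 B \<longleftrightarrow>
     (\<forall>m1 m2 \<alpha> m1'. B m1 m2 \<and> st_step N1 m1 \<alpha> m1' \<longrightarrow>
        (\<exists>m2d m2'. st_tau_steps N2 m2 m2d \<and>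
           (st_step N2 m2d \<alpha> m2' \<or> (\<alpha> = STau \<and> m2' = m2d)) \<and>
           B m1 m2d \<and> B m1' m2')) \<and>
     (\<forall>m1 m2 f. B m1 m2 \<and> f 0 = m1 \<and> (\<forall>i. st_step N1 (f i) STau (f (Suc i))) \<and>
        (\<forall>i. B (f i) m2) \<longrightarrow>
        (\<exists>g. g 0 = m2 \<and> (\<forall>i. st_step N2 (g i) STau (g (Suc i))) \<and>
             (\<forall>i j. B (f i) (g j))))"

definition bSTb_div_bisimilar :: "('s1, 't1, 'a) pnet \<Rightarrow> ('s2, 't2, 'a) pnet \<Rightarrow> bool" where
  "bSTb_div_bisimilar N1 N2 \<longleftrightarrow>
     (\<exists>B. (\<forall>m1 m2. B m1 m2 \<longrightarrow> m1 \<in> st_markings N1 \<and> m2 \<in> st_markings N2) \<and>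
          B (init N1, []) (init N2, []) \<and>
          bisim_half N1 N2 B \<and> bisim_half N2 N1 (\<lambda>y x. B x y))"

end

theory Submission
  imports Defs
begin

lemma bh_transfer:
  assumes "bisim_half N1 N2 B" "B m1 m2" "st_step N1 m1 \<alpha> m1'"
  shows "\<exists>m2d m2'. st_tau_steps N2 m2 m2d \<and>
           (st_step N2 m2d \<alpha> m2' \<or> (\<alpha> = STau \<and> m2' = m2d)) \<and>
           B m1 m2d \<and> B m1' m2'"
  using assms unfolding bisim_half_def by blast

lemma bh_div:
  assumes "bisim_half N1 N2 B" "B m1 m2" "f 0 = m1" "\<And>i. st_step N1 (f i) STau (f (Suc i))"
    "\<And>i. B (f i) m2"
  shows "\<exists>g. g 0 = m2 \<and> (\<forall>i. st_step N2 (g i) STau (g (Suc i))) \<and> (\<forall>i j. B (f i) (g j))"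
  using assms unfolding bisim_half_def by blast

lemma preM_single[simp]: "preM N {#t#} = pre N t"
  by (simp add: preM_def)

lemma postM_single[simp]: "postM N {#t#} = post N t"
  by (simp add: postM_def)

lemma preM_add: "preM N (add_mset t G) = (\<lambda>s. preM N G s + pre N t s)"
  by (simp add: preM_def add.commute)

lemma preM_snoc: "preM N (mset (L @ [t])) = (\<lambda>s. preM N (mset L) s + pre N t s)"
  by (simp add: preM_def add.commute)

lemma tau_mono:
  assumes "fires_lab N M None M'"
  shows "fires_lab N (\<lambda>s. M s + K s) None (\<lambda>s. M' s + K s)"
proof -
  obtain t where t: "lab N t = None" "fires_step N M {#t#} M'"
    using assms unfolding fires_lab_def by blast
  have le: "pre N t \<le> M" using t(2) unfolding fires_step_def by simp
  hence "\<And>s. pre N t s \<le> M s" by (simp add: le_fun_def)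
  moreover have "M' = (\<lambda>s. M s - pre N t s + post N t s)" using t(2) unfolding fires_step_def by simp
  moreover have "(\<lambda>s. M s - pre N t s + post N t s + K s) = (\<lambda>s. M s + K s - pre N t s + post N t s)"
  proof
    fix s have "pre N t s \<le> M s" using le by (simp add: le_fun_def)
    then show "M s - pre N t s + post N t s + K s = M s + K s - pre N t s + post N t s" by simp
  qed
  ultimately have "fires_step N (\<lambda>s. M s + K s) {#t#} (\<lambda>s. M' s + K s)"
    using t(2) le unfolding fires_step_def le_fun_def by (auto intro: trans_le_add1)
  thus ?thesis using t(1) unfolding fires_lab_def by blast
qed

lemma tau_steps_mono:
  assumes "tau_steps N M M'"
  shows "tau_steps N (\<lambda>s. M s + K s) (\<lambda>s. M' s + K s)"
  using assms
proof (induction rule: rtranclp_induct)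
  case base then show ?case by simp
next
  case (step y z)
  then show ?case using tau_mono[of N y z K] by (meson rtranclp.rtrancl_into_rtrancl)
qed

lemma st_tau_inv:
  assumes "st_step N (M, U) STau m'"
  shows "\<exists>M'. m' = (M', U) \<and> fires_lab N M None M'"
  using assms by (cases rule: st_step.cases) auto

lemma st_tau_steps_inv:
  assumes "st_tau_steps N (M, U) m'"
  shows "\<exists>M'. m' = (M', U) \<and> tau_steps N M M'"
  using assms
proof (induction rule: rtranclp_induct)
  case base then show ?case by simp
next
  case (step y z)
  then obtain My where y: "y = (My, U)" "tau_steps N M My" by blast
  then obtain Mz where z: "z = (Mz, U)" "fires_lab N My None Mz" using step st_tau_inv by fastforce
  have "tau_steps N M Mz" using y(2) z(2) by (meson rtranclp.rtrancl_into_rtrancl)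
  then show ?case using z(1) by blast
qed

lemma tau_lift:
  assumes "tau_steps N M M'"
  shows "st_tau_steps N (M, U) (M', U)"
  using assms
proof (induction rule: rtranclp_induct)
  case base then show ?case by simp
next
  case (step y z)
  then show ?case by (meson rtranclp.rtrancl_into_rtrancl st_step.tau)
qed

lemma weak_trace_pre:
  assumes "tau_steps N M Mx" "weak_trace N Mx \<sigma> M'"
  shows "weak_trace N M \<sigma> M'"
  using assms by (cases \<sigma>) (auto intro: rtranclp_trans)

lemma sim_tau:
  assumes H1: "bisim_half N1 N2 B"
  shows "tau_steps N1 M1 M1' \<Longrightarrow> B (M1, []) (M2, []) \<Longrightarrow>
     \<exists>M2'. tau_steps N2 M2 M2' \<and> B (M1', []) (M2', [])"
proof (induction rule: rtranclp_induct)
  case base then show ?case by blast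
next
  case (step y z)
  then obtain Ma where a: "tau_steps N2 M2 Ma" "B (y, []) (Ma, [])" by blast
  have "st_step N1 (y, []) STau (z, [])" using step(2) by (rule st_step.tau)
  from bh_transfer[OF H1 a(2) this] obtain m2d m2' where
    t: "st_tau_steps N2 (Ma, []) m2d" "st_step N2 m2d STau m2' \<or> m2' = m2d" "B (z, []) m2'"
    by blast
  obtain Md where d: "m2d = (Md, [])" "tau_steps N2 Ma Md" using st_tau_steps_inv[OF t(1)] by blast
  have "\<exists>Me. m2' = (Me, []) \<and> tau_steps N2 Md Me"
    using t(2) d st_tau_inv by fastforce
  then show ?case using a d t(3) by (meson rtranclp_trans)
qed

lemma sim_vis:
  assumes H1: "bisim_half N1 N2 B"
    and f: "fires_lab N1 M1 (Some a) M1'" and b: "B (M1, []) (M2, [])"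
  shows "\<exists>Ma Mb M2'. tau_steps N2 M2 Ma \<and> fires_lab N2 Ma (Some a) Mb \<and>
      tau_steps N2 Mb M2' \<and> B (M1', []) (M2', [])"
proof -
  obtain t where t: "lab N1 t = Some a" "fires_step N1 M1 {#t#} M1'"
    using f unfolding fires_lab_def by blast
  have tt: "t \<in> transitions N1" "pre N1 t \<le> M1" "M1' = (\<lambda>s. M1 s - pre N1 t s + post N1 t s)"
    using t(2) unfolding fires_step_def by auto
  have s1: "st_step N1 (M1, []) (Start a) (\<lambda>s. M1 s - pre N1 t s, [t])"
    using st_step.start[OF tt(1) t(1) tt(2), of "[]"] by simp
  from bh_transfer[OF H1 b s1] obtain m2d m2' where
    u: "st_tau_steps N2 (M2, []) m2d" "st_step N2 m2d (Start a) m2'"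
       "B (\<lambda>s. M1 s - pre N1 t s, [t]) m2'" by blast
  obtain Ma where ma: "m2d = (Ma, [])" "tau_steps N2 M2 Ma" using st_tau_steps_inv[OF u(1)] by blast
  obtain t' where t': "t' \<in> transitions N2" "lab N2 t' = Some a" "pre N2 t' \<le> Ma"
    "m2' = (\<lambda>s. Ma s - pre N2 t' s, [t'])"
    using u(2) unfolding ma(1) by (cases rule: st_step.cases) auto
  have s2: "st_step N1 (\<lambda>s. M1 s - pre N1 t s, [t]) (Finish a 1) (M1', [])"
    using st_step.finish[of 1 "[t]" N1 a "\<lambda>s. M1 s - pre N1 t s"] t(1) tt(3) by simp
  from bh_transfer[OF H1 u(3) s2] obtain m2e m2'' where
    v: "st_tau_steps N2 m2' m2e" "st_step N2 m2e (Finish a 1) m2''" "B (M1', []) m2''" by blast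
  obtain Z where z: "m2e = (Z, [t'])" "tau_steps N2 (\<lambda>s. Ma s - pre N2 t' s) Z"
    using st_tau_steps_inv[of N2 _ "[t']" m2e] v(1) t'(4) by blast
  have m2'': "m2'' = (\<lambda>s. Z s + post N2 t' s, [])"
    using v(2) unfolding z(1) by (cases rule: st_step.cases) auto
  have ff: "fires_lab N2 Ma (Some a) (\<lambda>s. Ma s - pre N2 t' s + post N2 t' s)"
    unfolding fires_lab_def fires_step_def using t' by auto
  have "tau_steps N2 (\<lambda>s. Ma s - pre N2 t' s + post N2 t' s) (\<lambda>s. Z s + post N2 t' s)"
    using tau_steps_mono[OF z(2), of "post N2 t'"] .
  then show ?thesis using ma(2) ff v(3) m2'' by blast
qed

lemma sim_trace:
  assumes H1: "bisim_half N1 N2 B"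
  shows "weak_trace N1 M1 \<sigma> M1' \<Longrightarrow> B (M1, []) (M2, []) \<Longrightarrow>
     \<exists>M2'. weak_trace N2 M2 \<sigma> M2' \<and> B (M1', []) (M2', [])"
proof (induction \<sigma> arbitrary: M1 M2)
  case Nil
  then show ?case using sim_tau[OF H1] by simp
next
  case (Cons a \<sigma>)
  then obtain Mx My where x: "tau_steps N1 M1 Mx" "fires_lab N1 Mx (Some a) My"
    "weak_trace N1 My \<sigma> M1'" by auto
  obtain Mx2 where x2: "tau_steps N2 M2 Mx2" "B (Mx, []) (Mx2, [])"
    using sim_tau[OF H1 x(1) Cons.prems(2)] by blast
  obtain Ma Mb My2 where y: "tau_steps N2 Mx2 Ma" "fires_lab N2 Ma (Some a) Mb"
      "tau_steps N2 Mb My2" "B (My, []) (My2, [])"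
    using sim_vis[OF H1 x(2) x2(2)] by blast
  obtain M2' where w: "weak_trace N2 My2 \<sigma> M2'" "B (M1', []) (M2', [])"
    using Cons.IH[OF x(3) y(4)] by blast
  have "weak_trace N2 Mb \<sigma> M2'" using weak_trace_pre[OF y(3) w(1)] .
  hence "weak_trace N2 M2 (a # \<sigma>) M2'" using x2(1) y(1) y(2) by (auto intro: rtranclp_trans)
  then show ?case using w(2) by blast
qed

lemma stable_reach:
  assumes H2: "bisim_half N2 N1 (\<lambda>y x. B x y)"
    and st: "\<not> (\<exists>M'. fires_lab N1 M1 None M')"
  shows "tau_steps N2 M2 M \<Longrightarrow> B (M1, []) (M2, []) \<Longrightarrow> B (M1, []) (M, [])"
proof (induction rule: rtranclp_induct)
  case base then show ?case .
next
  case (step y z)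
  have "st_step N2 (y, []) STau (z, [])" using step(2) by (rule st_step.tau)
  from bh_transfer[OF H2 _ this, of "(M1, [])"] step obtain m1d m1' where
    t: "st_tau_steps N1 (M1, []) m1d" "st_step N1 m1d STau m1' \<or> m1' = m1d" "B m1' (z, [])"
    by auto
  obtain Md where d: "m1d = (Md, [])" "tau_steps N1 M1 Md" using st_tau_steps_inv[OF t(1)] by blast
  have "Md = M1" using d(2) st by (cases rule: converse_rtranclpE) auto
  hence "m1' = m1d" using t(2) d(1) st st_tau_inv by fastforce
  then show ?case using t(3) d \<open>Md = M1\<close> by simp
qed

lemma stable_exists:
  assumes H2: "bisim_half N2 N1 (\<lambda>y x. B x y)"
    and st: "\<not> (\<exists>M'. fires_lab N1 M1 None M')"
    and b: "B (M1, []) (M2, [])"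
  shows "\<exists>M2'. tau_steps N2 M2 M2' \<and> \<not> (\<exists>M'. fires_lab N2 M2' None M') \<and> B (M1, []) (M2', [])"
proof (rule ccontr)
  assume na: "\<not> ?thesis"
  have reach: "\<And>M. tau_steps N2 M2 M \<Longrightarrow> B (M1, []) (M, [])"
    using stable_reach[OF H2 st] b by blast
  have nxt: "\<And>M. tau_steps N2 M2 M \<Longrightarrow> \<exists>M'. fires_lab N2 M None M'"
    using na reach by blast
  define h where "h = rec_nat M2 (\<lambda>_ M. SOME M'. fires_lab N2 M None M')"
  have hr: "tau_steps N2 M2 (h i) \<and> fires_lab N2 (h i) None (h (Suc i))" for i
  proof (induction i)
    case 0
    have "fires_lab N2 M2 None (SOME M'. fires_lab N2 M2 None M')"
      using nxt[OF rtranclp.rtrancl_refl] by (rule someI_ex)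
    then show ?case by (simp add: h_def)
  next
    case (Suc i)
    hence r: "tau_steps N2 M2 (h (Suc i))" by (meson rtranclp.rtrancl_into_rtrancl)
    have "fires_lab N2 (h (Suc i)) None (SOME M'. fires_lab N2 (h (Suc i)) None M')"
      using nxt[OF r] by (rule someI_ex)
    then show ?case using r by (simp add: h_def)
  qed
  have f0: "(\<lambda>i. (h i, [])) 0 = (M2, [])" by (simp add: h_def)
  have fs: "\<And>i. st_step N2 ((\<lambda>i. (h i, [])) i) STau ((\<lambda>i. (h i, [])) (Suc i))"
    using hr by (blast intro: st_step.tau)
  have fb: "\<And>i. (\<lambda>y x. B x y) ((\<lambda>i. (h i, [])) i) (M1, [])" using hr reach by blast
  from bh_div[OF H2 _ f0 fs fb] b obtain g where
    g: "g 0 = (M1, [])" "\<forall>i. st_step N1 (g i) STau (g (Suc i))" by auto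
  have "st_step N1 (M1, []) STau (g 1)" using g by (metis One_nat_def)
  then show False using st st_tau_inv by fastforce
qed

lemma refusal:
  assumes H2: "bisim_half N2 N1 (\<lambda>y x. B x y)"
    and st: "\<not> (\<exists>M'. fires_lab N1 M1 None M')"
    and b: "B (M1, []) (M2, [])"
  shows "set L \<subseteq> transitions N2 \<Longrightarrow> (\<forall>t\<in>set L. lab N2 t \<noteq> None) \<Longrightarrow> preM N2 (mset L) \<le> M2 \<Longrightarrow>
    \<exists>L1. B (\<lambda>s. M1 s - preM N1 (mset L1) s, L1) (\<lambda>s. M2 s - preM N2 (mset L) s, L) \<and>
       map (lab N1) L1 = map (lab N2) L \<and> preM N1 (mset L1) \<le> M1 \<and> set L1 \<subseteq> transitions N1"
proof (induction L rule: rev_induct)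
  case Nil
  have "(\<lambda>s. M1 s - preM N1 (mset []) s, []) = (M1, [])" "(\<lambda>s. M2 s - preM N2 (mset []) s, []) = (M2, [])"
    by (auto simp: preM_def)
  then show ?case using b by (intro exI[of _ "[]"]) (auto simp: preM_def le_fun_def)
next
  case (snoc t L)
  have "\<forall>s. preM N2 (mset L) s + pre N2 t s \<le> M2 s" using snoc.prems(3) by (simp add: preM_add le_fun_def)
  hence pl: "preM N2 (mset L) \<le> M2" by (metis add_leD1 le_funI)
  obtain L1 where L1: "B (\<lambda>s. M1 s - preM N1 (mset L1) s, L1) (\<lambda>s. M2 s - preM N2 (mset L) s, L)"
    "map (lab N1) L1 = map (lab N2) L" "preM N1 (mset L1) \<le> M1" "set L1 \<subseteq> transitions N1"
    using snoc.IH snoc.prems pl by auto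
  obtain a where a: "lab N2 t = Some a" using snoc.prems(2) by auto
  have tt: "t \<in> transitions N2" using snoc.prems(1) by auto
  have ple: "pre N2 t \<le> (\<lambda>s. M2 s - preM N2 (mset L) s)"
  proof (rule le_funI)
    fix s have "preM N2 (mset L) s + pre N2 t s \<le> M2 s" using \<open>\<forall>s. preM N2 (mset L) s + pre N2 t s \<le> M2 s\<close> by blast
    then show "pre N2 t s \<le> (\<lambda>s. M2 s - preM N2 (mset L) s) s" by simp
  qed
  have s2: "st_step N2 (\<lambda>s. M2 s - preM N2 (mset L) s, L) (Start a)
     (\<lambda>s. M2 s - preM N2 (mset (L @ [t])) s, L @ [t])"
    using st_step.start[OF tt a ple, of L] by (simp add: preM_add diff_diff_add)
  from bh_transfer[OF H2 _ s2, of "(\<lambda>s. M1 s - preM N1 (mset L1) s, L1)"] L1(1) obtain m1d m1' where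
    u: "st_tau_steps N1 (\<lambda>s. M1 s - preM N1 (mset L1) s, L1) m1d" "st_step N1 m1d (Start a) m1'"
      "B m1' (\<lambda>s. M2 s - preM N2 (mset (L @ [t])) s, L @ [t])" by auto
  obtain Md where d: "m1d = (Md, L1)" "tau_steps N1 (\<lambda>s. M1 s - preM N1 (mset L1) s) Md"
    using st_tau_steps_inv[OF u(1)] by blast
  have nst: "\<not> fires_lab N1 (\<lambda>s. M1 s - preM N1 (mset L1) s) None M'" for M'
  proof
    assume "fires_lab N1 (\<lambda>s. M1 s - preM N1 (mset L1) s) None M'"
    from tau_mono[OF this, of "preM N1 (mset L1)"]
    have "fires_lab N1 (\<lambda>s. M1 s - preM N1 (mset L1) s + preM N1 (mset L1) s) None
       (\<lambda>s. M' s + preM N1 (mset L1) s)" .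
    moreover have "(\<lambda>s. M1 s - preM N1 (mset L1) s + preM N1 (mset L1) s) = M1"
      using L1(3) by (auto simp: le_fun_def)
    ultimately show False using st by auto
  qed
  have "Md = (\<lambda>s. M1 s - preM N1 (mset L1) s)" using d(2) nst by (cases rule: converse_rtranclpE) auto
  hence "st_step N1 (\<lambda>s. M1 s - preM N1 (mset L1) s, L1) (Start a) m1'" using u(2) d(1) by simp
  then obtain t1 where t1: "t1 \<in> transitions N1" "lab N1 t1 = Some a"
    "pre N1 t1 \<le> (\<lambda>s. M1 s - preM N1 (mset L1) s)"
    "m1' = (\<lambda>s. M1 s - preM N1 (mset L1) s - pre N1 t1 s, L1 @ [t1])"
    by (cases rule: st_step.cases) auto
  have eq: "(\<lambda>s. M1 s - preM N1 (mset L1) s - pre N1 t1 s) = (\<lambda>s. M1 s - preM N1 (mset (L1 @ [t1])) s)"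
    by (simp add: preM_add diff_diff_add)
  show ?case
  proof (intro exI[of _ "L1 @ [t1]"] conjI)
    show "B (\<lambda>s. M1 s - preM N1 (mset (L1 @ [t1])) s, L1 @ [t1])
        (\<lambda>s. M2 s - preM N2 (mset (L @ [t])) s, L @ [t])" using u(3) t1(4) eq by simp
    show "map (lab N1) (L1 @ [t1]) = map (lab N2) (L @ [t])" using L1(2) t1(2) a by simp
    show "preM N1 (mset (L1 @ [t1])) \<le> M1"
    proof (rule le_funI)
      fix s
      have "pre N1 t1 s \<le> M1 s - preM N1 (mset L1) s" using t1(3) by (simp add: le_fun_def)
      moreover have "preM N1 (mset L1) s \<le> M1 s" using L1(3) by (simp add: le_fun_def)
      ultimately show "preM N1 (mset (L1 @ [t1])) s \<le> M1 s" by (simp add: preM_add)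
    qed
    show "set (L1 @ [t1]) \<subseteq> transitions N1" using L1(4) t1(1) by simp
  qed
qed

lemma refusal_step:
  assumes H2: "bisim_half N2 N1 (\<lambda>y x. B x y)"
    and st: "\<not> (\<exists>M'. fires_lab N1 M1 None M')"
    and b: "B (M1, []) (M2, [])"
    and en: "step_enabled N2 M2 A"
  shows "step_enabled N1 M1 A"
proof -
  obtain G M' where G: "\<forall>t\<in>#G. lab N2 t \<noteq> None" "image_mset (lab N2) G = image_mset Some A"
    "fires_step N2 M2 G M'" using en unfolding step_enabled_def by blast
  obtain L where L: "mset L = G" using ex_mset by blast
  have f: "G \<noteq> {#}" "set_mset G \<subseteq> transitions N2" "preM N2 G \<le> M2"
    using G(3) unfolding fires_step_def by auto
  obtain L1 where L1: "map (lab N1) L1 = map (lab N2) L" "preM N1 (mset L1) \<le> M1"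
    "set L1 \<subseteq> transitions N1"
    using refusal[OF H2 st b, of L] f G(1) L by auto
  have "length L1 = length L" using L1(1) by (metis length_map)
  hence ne: "mset L1 \<noteq> {#}" using f(1) L by auto
  have lab1: "\<forall>t\<in>#mset L1. lab N1 t \<noteq> None"
  proof
    fix t assume "t \<in># mset L1"
    hence "lab N1 t \<in> set (map (lab N2) L)" using L1(1) by (metis image_eqI list.set_map set_mset_mset)
    then show "lab N1 t \<noteq> None" using G(1) L by auto
  qed
  have im: "image_mset (lab N1) (mset L1) = image_mset Some A"
    using L1(1) G(2) L by (metis mset_map)
  have "fires_step N1 M1 (mset L1) (\<lambda>s. M1 s - preM N1 (mset L1) s + postM N1 (mset L1) s)"
    unfolding fires_step_def using ne L1 by auto
  then show ?thesis unfolding step_enabled_def using lab1 im by blast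
qed

lemma half_incl:
  assumes H1: "bisim_half N1 N2 B" and H2: "bisim_half N2 N1 (\<lambda>y x. B x y)"
    and b0: "B (init N1, []) (init N2, [])"
  shows "step_failure_pairs N1 \<subseteq> step_failure_pairs N2"
proof
  fix p assume "p \<in> step_failure_pairs N1"
  then obtain \<sigma> X M1 where p: "p = (\<sigma>, X)" "finite X" "\<forall>A\<in>X. A \<noteq> {#}"
    "weak_trace N1 (init N1) \<sigma> M1" "\<not> (\<exists>M'. fires_lab N1 M1 None M')"
    "\<forall>A\<in>X. \<not> step_enabled N1 M1 A"
    unfolding step_failure_pairs_def by blast
  obtain M2 where m2: "weak_trace N2 (init N2) \<sigma> M2" "B (M1, []) (M2, [])"
    using sim_trace[OF H1 p(4) b0] by blast
  obtain M2' where m2': "tau_steps N2 M2 M2'" "\<not> (\<exists>M'. fires_lab N2 M2' None M')"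
    "B (M1, []) (M2', [])" using stable_exists[OF H2 p(5) m2(2)] by blast
  have wt: "weak_trace N2 (init N2) \<sigma> M2'"
  proof -
    have wt_post: "weak_trace N M \<sigma> M' \<Longrightarrow> tau_steps N M' M'' \<Longrightarrow> weak_trace N M \<sigma> M''"
      for N M \<sigma> M' M''
      by (induction N M \<sigma> M' rule: weak_trace.induct) (auto intro: rtranclp_trans)
    show ?thesis by (rule wt_post[OF m2(1) m2'(1)])
  qed
  have "\<forall>A\<in>X. \<not> step_enabled N2 M2' A"
    using p(6) refusal_step[OF H2 p(5) m2'(3)] by blast
  then show "p \<in> step_failure_pairs N2"
    unfolding step_failure_pairs_def using p wt m2'(2) by blast
qed

theorem proposition3p8:
  fixes N1 :: "('s1, 't1, 'a) pnet" and N2 :: "('s2, 't2, 'a) pnet"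
  assumes "petri_net N1" and "petri_net N2"
    and "bSTb_div_bisimilar N1 N2"
  shows "step_failures_equiv N1 N2"
proof -
  obtain B where B: "B (init N1, []) (init N2, [])" "bisim_half N1 N2 B"
    "bisim_half N2 N1 (\<lambda>y x. B x y)"
    using assms(3) unfolding bSTb_div_bisimilar_def by blast
  have "step_failure_pairs N1 \<subseteq> step_failure_pairs N2" using half_incl[OF B(2) B(3) B(1)] .
  moreover have "step_failure_pairs N2 \<subseteq> step_failure_pairs N1"
    using half_incl[of N2 N1 "\<lambda>y x. B x y"] B by auto
  ultimately show ?thesis unfolding step_failures_equiv_def by blast
qed

end
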